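(* For the uniform noising process on $[S]^d$ started from any $q_0$, and for every $i\in[d]$, $c\in[S]$, the function $\varphi_{i,c}(t)=\mathbb E_{x\sim q_t}[-\log s_t(x\oplus_ic,x)]$ is differentiable on $(0,\infty)$ and satisfies $$-\varphi_{i,c}'(t)\ge\varphi_{i,c}(t)\qquad\text{for all }t>0.$$ Consequently $\varphi(t)=\frac1S\sum_{i,c}\varphi_{i,c}(t)$ satisfies $-\varphi'(t)\ge\varphi(t)\ge0$, and $\varphi$ is non-increasing on $(0,\infty)$.
   Context: Uniform noising process: time-homogeneous CTMC on $[S]^d$ with rate $1/S$ between states at Hamming distance one and $0$ between states at Hamming distance $\ge2$; $q_t$ its time-$t$ law; $s_t(y,x)=q_t(y)/q_t(x)$. $x\oplus_i c$: $x$ with coordinate $i$ replaced by $(x^i+c)\bmod S$, convention $0\bmod S=S$. *)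

theory Defs
  imports "HOL-Analysis.Analysis" "HOL-Library.FuncSet"
begin

definition states :: "nat \<Rightarrow> nat \<Rightarrow> (nat \<Rightarrow> nat) set" where
  "states S d = PiE {1..d} (\<lambda>_. {1..S})"

definition hamming :: "nat \<Rightarrow> (nat \<Rightarrow> nat) \<Rightarrow> (nat \<Rightarrow> nat) \<Rightarrow> nat" where
  "hamming d x y = card {i \<in> {1..d}. x i \<noteq> y i}"

definition rate :: "nat \<Rightarrow> nat \<Rightarrow> (nat \<Rightarrow> nat) \<Rightarrow> (nat \<Rightarrow> nat) \<Rightarrow> real" where
  "rate S d x y = (if hamming d x y = 1 then 1 / real S else 0)"

definition gen :: "nat \<Rightarrow> nat \<Rightarrow> (nat \<Rightarrow> nat) \<Rightarrow> (nat \<Rightarrow> nat) \<Rightarrow> real" where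
  "gen S d x y = (if x = y then - (\<Sum>z\<in>states S d - {x}. rate S d x z) else rate S d x y)"

text \<open>q is the time-t law of the chain started from q0: the solution on [0,\<infinity>) of the
  Kolmogorov forward equation with initial law q0.\<close>
definition is_law :: "nat \<Rightarrow> nat \<Rightarrow> ((nat \<Rightarrow> nat) \<Rightarrow> real) \<Rightarrow> (real \<Rightarrow> (nat \<Rightarrow> nat) \<Rightarrow> real) \<Rightarrow> bool" where
  "is_law S d q0 q \<longleftrightarrow>
     (\<forall>y\<in>states S d. q 0 y = q0 y) \<and>
     (\<forall>t\<ge>0. \<forall>y\<in>states S d.
        ((\<lambda>\<tau>. q \<tau> y) has_real_derivative (\<Sum>x\<in>states S d. q t x * gen S d x y)) (at t within {0..}))"

text \<open>Cyclic shift with the convention 0 mod S = S.\<close>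
definition cshift :: "nat \<Rightarrow> nat \<Rightarrow> nat \<Rightarrow> nat" where
  "cshift S a c = (if (a + c) mod S = 0 then S else (a + c) mod S)"

definition oplus :: "nat \<Rightarrow> (nat \<Rightarrow> nat) \<Rightarrow> nat \<Rightarrow> nat \<Rightarrow> (nat \<Rightarrow> nat)" where
  "oplus S x i c = x(i := cshift S (x i) c)"

definition ratio :: "(real \<Rightarrow> (nat \<Rightarrow> nat) \<Rightarrow> real) \<Rightarrow> real \<Rightarrow> (nat \<Rightarrow> nat) \<Rightarrow> (nat \<Rightarrow> nat) \<Rightarrow> real" where
  "ratio q t y x = q t y / q t x"

definition phi_ic :: "nat \<Rightarrow> nat \<Rightarrow> (real \<Rightarrow> (nat \<Rightarrow> nat) \<Rightarrow> real) \<Rightarrow> nat \<Rightarrow> nat \<Rightarrow> real \<Rightarrow> real" where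
  "phi_ic S d q i c t = (\<Sum>x\<in>states S d. q t x * (- ln (ratio q t (oplus S x i c) x)))"

definition phi :: "nat \<Rightarrow> nat \<Rightarrow> (real \<Rightarrow> (nat \<Rightarrow> nat) \<Rightarrow> real) \<Rightarrow> real \<Rightarrow> real" where
  "phi S d q t = (1 / real S) * (\<Sum>i\<in>{1..d}. \<Sum>c\<in>{1..S}. phi_ic S d q i c t)"

end

theory Submission
  imports Defs
begin

lemma upd_in_states:
  assumes "x \<in> states S d" "j \<in> {1..d}" "a \<in> {1..S}"
  shows "x(j:=a) \<in> states S d"
  using assms unfolding states_def by (auto simp: PiE_iff extensional_def)

lemma finite_states: "finite (states S d)"
  unfolding states_def by (rule finite_PiE) auto

lemma swap_sum:
  assumes j: "j \<in> {1..d}"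
  shows "(\<Sum>x\<in>states S d. \<Sum>a\<in>{1..S}. h (x(j:=a)) x) = (\<Sum>x\<in>states S d. \<Sum>a\<in>{1..S}. h x (x(j:=a)))"
proof -
  let ?T = "states S d \<times> {1..S}"
  have "(\<Sum>x\<in>states S d. \<Sum>a\<in>{1..S}. h (x(j:=a)) x) = (\<Sum>(x,a)\<in>?T. h (x(j:=a)) x)"
    by (simp add: sum.cartesian_product)
  also have "\<dots> = (\<Sum>(x,a)\<in>?T. h x (x(j:=a)))"
    apply (rule sum.reindex_bij_witness[where i="\<lambda>(x,a). (x(j:=a), x j)" and j="\<lambda>(x,a). (x(j:=a), x j)"])
    using j by (auto split: prod.splits simp: upd_in_states) (auto simp: states_def PiE_iff)
  also have "\<dots> = (\<Sum>x\<in>states S d. \<Sum>a\<in>{1..S}. h x (x(j:=a)))"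
    by (simp add: sum.cartesian_product)
  finally show ?thesis .
qed

lemma swap_K:
  assumes j: "j \<in> {1..d}"
    and K: "\<And>x a. x \<in> states S d \<Longrightarrow> a \<in> {1..S} \<Longrightarrow> K (x(j:=a)) = K x"
  shows "(\<Sum>x\<in>states S d. (\<Sum>a\<in>{1..S}. p (x(j:=a))) * K x) = real S * (\<Sum>x\<in>states S d. p x * K x)"
proof -
  have "(\<Sum>x\<in>states S d. (\<Sum>a\<in>{1..S}. p (x(j:=a))) * K x) = (\<Sum>x\<in>states S d. \<Sum>a\<in>{1..S}. p (x(j:=a)) * K x)"
    by (simp add: sum_distrib_right)
  also have "\<dots> = (\<Sum>x\<in>states S d. \<Sum>a\<in>{1..S}. p x * K (x(j:=a)))"
    using swap_sum[OF j, where S=S and h="\<lambda>u v. p u * K v"] by simp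
  also have "\<dots> = (\<Sum>x\<in>states S d. real S * (p x * K x))"
    using K by (intro sum.cong) auto
  finally show ?thesis by (simp add: sum_distrib_left)
qed

definition Lop :: "nat \<Rightarrow> nat \<Rightarrow> ((nat\<Rightarrow>nat)\<Rightarrow>real) \<Rightarrow> (nat\<Rightarrow>nat) \<Rightarrow> real" where
  "Lop S d p y = (\<Sum>j\<in>{1..d}. (\<Sum>a\<in>{1..S}. p (y(j:=a))) / real S - p y)"

lemma hamming_sym: "hamming d x y = hamming d y x"
  unfolding hamming_def by (rule arg_cong[where f=card]) auto

lemma neighbors:
  assumes y: "y \<in> states S d"
  shows "{x\<in>states S d. hamming d x y = 1} = (\<lambda>(j,a). y(j:=a)) ` (SIGMA j:{1..d}. {1..S} - {y j})"
proof (intro equalityI subsetI)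
  fix x assume x: "x \<in> {x\<in>states S d. hamming d x y = 1}"
  then have "card {i \<in> {1..d}. x i \<noteq> y i} = 1" by (simp add: hamming_def)
  then obtain j where J: "{i \<in> {1..d}. x i \<noteq> y i} = {j}" by (rule card_1_singletonE)
  have jd: "j \<in> {1..d}" and xj: "x j \<noteq> y j" using J by auto
  have xs: "x \<in> states S d" using x by simp
  have "x = y(j := x j)"
  proof
    fix i show "x i = (y(j := x j)) i"
    proof (cases "i \<in> {1..d}")
      case True then show ?thesis using J by auto
    next
      case False then show ?thesis using xs y by (auto simp: states_def PiE_iff extensional_def)
    qed
  qed
  moreover have "x j \<in> {1..S}" using xs jd by (auto simp: states_def PiE_iff)
  ultimately show "x \<in> (\<lambda>(j,a). y(j:=a)) ` (SIGMA j:{1..d}. {1..S} - {y j})"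
    using jd xj by (auto intro!: image_eqI[where x="(j, x j)"])
next
  fix x assume "x \<in> (\<lambda>(j,a). y(j:=a)) ` (SIGMA j:{1..d}. {1..S} - {y j})"
  then obtain pr where pr: "pr \<in> (SIGMA j:{1..d}. {1..S} - {y j})" and xp: "x = (\<lambda>(j,a). y(j:=a)) pr" by (rule imageE)
  obtain j a where pja: "pr = (j,a)" by (cases pr)
  have jaS: "(j,a) \<in> (SIGMA j:{1..d}. {1..S} - {y j})" and xd: "x = y(j:=a)" using pr xp pja by auto
  then have ja: "j \<in> {1..d}" "a \<in> {1..S}" "a \<noteq> y j" by auto
  have "{i \<in> {1..d}. x i \<noteq> y i} = {j}" using ja xd by auto
  then have "hamming d x y = 1" by (simp add: hamming_def)
  moreover have "x \<in> states S d" using xd upd_in_states[OF y ja(1,2)] by simp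
  ultimately show "x \<in> {x\<in>states S d. hamming d x y = 1}" by simp
qed

lemma nb_inj: "inj_on (\<lambda>(j,a). y(j:=a)) (SIGMA j:{1..d}. {1..S} - {y j})"
  unfolding inj_on_def by clarsimp (metis fun_upd_apply)

lemma rate_sum:
  assumes y: "y \<in> states S d"
  shows "(\<Sum>x\<in>states S d - {y}. rate S d x y * F x) = (\<Sum>j\<in>{1..d}. \<Sum>a\<in>{1..S}-{y j}. F (y(j:=a))) / real S"
proof -
  have hy: "hamming d y y = 0" by (simp add: hamming_def)
  have "(\<Sum>x\<in>states S d - {y}. rate S d x y * F x) = (\<Sum>x\<in>states S d - {y}. if hamming d x y = 1 then F x / real S else 0)"
    by (intro sum.cong) (auto simp: rate_def)
  also have "\<dots> = (\<Sum>x\<in>{x\<in>states S d - {y}. hamming d x y = 1}. F x / real S)"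
    by (rule sum.inter_filter[symmetric]) (simp add: finite_states)
  also have "{x\<in>states S d - {y}. hamming d x y = 1} = {x\<in>states S d. hamming d x y = 1}"
    using hy by auto
  also have "\<dots> = (\<lambda>(j,a). y(j:=a)) ` (SIGMA j:{1..d}. {1..S} - {y j})" by (rule neighbors[OF y])
  also have "(\<Sum>x\<in>\<dots>. F x / real S) = (\<Sum>(j,a)\<in>(SIGMA j:{1..d}. {1..S} - {y j}). F (y(j:=a)) / real S)"
    by (subst sum.reindex[OF nb_inj]) (simp add: case_prod_unfold)
  also have "\<dots> = (\<Sum>j\<in>{1..d}. \<Sum>a\<in>{1..S}-{y j}. F (y(j:=a)) / real S)"
    by (subst sum.Sigma[symmetric]) auto
  finally show ?thesis by (simp add: sum_divide_distrib)
qed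

lemma gen_sum:
  assumes y: "y \<in> states S d" and S: "S \<ge> 1"
  shows "(\<Sum>x\<in>states S d. p x * gen S d x y) = Lop S d p y"
proof -
  have yj: "\<And>j. j \<in> {1..d} \<Longrightarrow> y j \<in> {1..S}" using y by (auto simp: states_def PiE_iff)
  have "(\<Sum>x\<in>states S d. p x * gen S d x y) = p y * gen S d y y + (\<Sum>x\<in>states S d - {y}. p x * gen S d x y)"
    by (rule sum.remove[OF finite_states y])
  also have "(\<Sum>x\<in>states S d - {y}. p x * gen S d x y) = (\<Sum>x\<in>states S d - {y}. rate S d x y * p x)"
    by (intro sum.cong) (auto simp: gen_def)
  also have "\<dots> = (\<Sum>j\<in>{1..d}. \<Sum>a\<in>{1..S}-{y j}. p (y(j:=a))) / real S" by (rule rate_sum[OF y])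
  also have "gen S d y y = - (\<Sum>x\<in>states S d - {y}. rate S d x y * 1)"
    by (simp add: gen_def hamming_sym rate_def)
  also have "\<dots> = - (\<Sum>j\<in>{1..d}. \<Sum>a\<in>{1..S}-{y j}. (1::real)) / real S"
    by (subst rate_sum[OF y]) simp
  also have "(\<Sum>j\<in>{1..d}. \<Sum>a\<in>{1..S}-{y j}. (1::real)) = (\<Sum>j\<in>{1..d}. real S - 1)"
    using yj S by (intro sum.cong) (auto simp: card_Diff_singleton)
  also have "(\<Sum>j\<in>{1..d}. \<Sum>a\<in>{1..S}-{y j}. p (y(j:=a))) = (\<Sum>j\<in>{1..d}. (\<Sum>a\<in>{1..S}. p (y(j:=a))) - p y)"
  proof (intro sum.cong refl)
    fix j assume "j \<in> {1..d}"
    then have "(\<Sum>a\<in>{1..S}. p (y(j:=a))) = p (y(j:=y j)) + (\<Sum>a\<in>{1..S}-{y j}. p (y(j:=a)))"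
      using yj by (intro sum.remove) auto
    then show "(\<Sum>a\<in>{1..S}-{y j}. p (y(j:=a))) = (\<Sum>a\<in>{1..S}. p (y(j:=a))) - p y" by simp
  qed
  finally have "(\<Sum>x\<in>states S d. p x * gen S d x y) =
     p y * (- (\<Sum>j\<in>{1..d}. real S - 1) / real S) + (\<Sum>j\<in>{1..d}. (\<Sum>a\<in>{1..S}. p (y(j:=a))) - p y) / real S" .
  also have "\<dots> = Lop S d p y"
    using S by (simp add: Lop_def sum_divide_distrib sum_subtractf field_simps)
  finally show ?thesis .
qed

lemma Lop_sum:
  assumes S: "S \<ge> 1"
  shows "(\<Sum>y\<in>states S d. Lop S d p y) = 0"
proof -
  have "(\<Sum>y\<in>states S d. Lop S d p y) = (\<Sum>j\<in>{1..d}. (\<Sum>y\<in>states S d. (\<Sum>a\<in>{1..S}. p (y(j:=a))) * (1 / real S)) - (\<Sum>y\<in>states S d. p y))"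
    unfolding Lop_def by (subst sum.swap) (simp add: sum_subtractf sum_divide_distrib)
  also have "\<dots> = (\<Sum>j\<in>{1..d}. 0)"
  proof (intro sum.cong refl)
    fix j assume j: "j \<in> {1..d}"
    have "(\<Sum>y\<in>states S d. (\<Sum>a\<in>{1..S}. p (y(j:=a))) * (1 / real S)) = real S * (\<Sum>y\<in>states S d. p y * (1 / real S))"
      by (rule swap_K[OF j]) simp
    then show "(\<Sum>y\<in>states S d. (\<Sum>a\<in>{1..S}. p (y(j:=a))) * (1 / real S)) - (\<Sum>y\<in>states S d. p y) = 0"
      using S by (simp add: sum_divide_distrib[symmetric])
  qed
  finally show ?thesis by simp
qed

lemma Lop_expand:
  "(\<Sum>y\<in>states S d. w y * Lop S d p y) = (\<Sum>j\<in>{1..d}. (\<Sum>y\<in>states S d. w y * (\<Sum>a\<in>{1..S}. p (y(j:=a)))) / real S - (\<Sum>y\<in>states S d. w y * p y))"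
proof -
  have "(\<Sum>y\<in>states S d. w y * Lop S d p y) = (\<Sum>y\<in>states S d. \<Sum>j\<in>{1..d}. w y * (\<Sum>a\<in>{1..S}. p (y(j:=a))) / real S - w y * p y)"
    unfolding Lop_def by (simp add: sum_distrib_left right_diff_distrib)
  also have "\<dots> = (\<Sum>j\<in>{1..d}. \<Sum>y\<in>states S d. w y * (\<Sum>a\<in>{1..S}. p (y(j:=a))) / real S - w y * p y)"
    by (rule sum.swap)
  also have "\<dots> = (\<Sum>j\<in>{1..d}. (\<Sum>y\<in>states S d. w y * (\<Sum>a\<in>{1..S}. p (y(j:=a)))) / real S - (\<Sum>y\<in>states S d. w y * p y))"
    by (simp only: sum_subtractf sum_divide_distrib)
  finally show ?thesis .
qed

lemma neg_part_le:
  assumes S: "S \<ge> 1"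
  shows "(\<Sum>y\<in>states S d. min (p y) 0 * Lop S d p y) \<le> 0"
proof -
  define m where "m y = min (p y) 0" for y
  have "(\<Sum>y\<in>states S d. m y * Lop S d p y) = (\<Sum>j\<in>{1..d}. (\<Sum>y\<in>states S d. \<Sum>a\<in>{1..S}. m y * p (y(j:=a))) / real S - (\<Sum>y\<in>states S d. m y * p y))"
    unfolding Lop_expand by (simp add: sum_distrib_left)
  also have "\<dots> \<le> (\<Sum>j\<in>{1..d}. 0)"
  proof (intro sum_mono)
    fix j assume j: "j \<in> {1..d}"
    have "(\<Sum>y\<in>states S d. \<Sum>a\<in>{1..S}. m y * p (y(j:=a))) \<le> (\<Sum>y\<in>states S d. \<Sum>a\<in>{1..S}. ((m y)^2 + (m (y(j:=a)))^2) / 2)"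
    proof (intro sum_mono)
      fix y a
      have "m y * p (y(j:=a)) \<le> m y * m (y(j:=a))"
        by (rule mult_left_mono_neg) (auto simp: m_def)
      also have "\<dots> \<le> ((m y)^2 + (m (y(j:=a)))^2) / 2"
        using sum_squares_ge_zero[of "m y - m (y(j:=a))" 0]
        by (simp add: power2_eq_square algebra_simps)
      finally show "m y * p (y(j:=a)) \<le> ((m y)^2 + (m (y(j:=a)))^2) / 2" .
    qed
    also have "\<dots> = (\<Sum>y\<in>states S d. \<Sum>a\<in>{1..S}. (m y)^2 / 2) + (\<Sum>y\<in>states S d. \<Sum>a\<in>{1..S}. (m (y(j:=a)))^2 / 2)"
      by (simp add: add_divide_distrib sum.distrib)
    also have "(\<Sum>y\<in>states S d. \<Sum>a\<in>{1..S}. (m (y(j:=a)))^2 / 2) = (\<Sum>y\<in>states S d. \<Sum>a\<in>{1..S}. (m y)^2 / 2)"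
      using swap_sum[OF j, where S=S and h="\<lambda>u v. (m u)^2 / 2"] by simp
    also have "(\<Sum>y\<in>states S d. \<Sum>a\<in>{1..S}. (m y)^2 / 2) + (\<Sum>y\<in>states S d. \<Sum>a\<in>{1..S}. (m y)^2 / 2)
        = (\<Sum>y\<in>states S d. real S * (m y)^2)"
      by (simp add: sum.distrib[symmetric])
    also have "\<dots> = (\<Sum>y\<in>states S d. m y * p y) * real S"
    proof -
      have "m y * p y = (m y)^2" for y by (simp add: m_def min_def power2_eq_square)
      then show ?thesis by (simp add: sum_distrib_right sum_distrib_left mult_ac)
    qed
    finally have X: "(\<Sum>y\<in>states S d. \<Sum>a\<in>{1..S}. m y * p (y(j:=a))) \<le> (\<Sum>y\<in>states S d. m y * p y) * real S" .
    have Sp: "real S > 0" using S by simp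
    have "(\<Sum>y\<in>states S d. \<Sum>a\<in>{1..S}. m y * p (y(j:=a))) / real S \<le> (\<Sum>y\<in>states S d. m y * p y)"
      using pos_divide_le_eq[OF Sp] X by (rule iffD2)
    then show "(\<Sum>y\<in>states S d. \<Sum>a\<in>{1..S}. m y * p (y(j:=a))) / real S - (\<Sum>y\<in>states S d. m y * p y) \<le> 0"
      by simp
  qed
  finally show ?thesis by (simp add: m_def)
qed

lemma antimono_deriv:
  fixes f f' :: "real \<Rightarrow> real"
  assumes der: "\<And>t. t \<ge> 0 \<Longrightarrow> (f has_real_derivative f' t) (at t within {0..})"
    and neg: "\<And>t. t \<ge> 0 \<Longrightarrow> f' t \<le> 0"
    and ab: "0 \<le> a" "a \<le> b"
  shows "f b \<le> f a"
proof (rule DERIV_nonpos_imp_decreasing_open[OF ab(2)])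
  fix x assume x: "a < x" "x < b"
  then have "x \<in> interior {0::real..}" using ab by simp
  then have e: "at x within {0..} = at x" by (rule at_within_interior)
  have x0: "x \<ge> 0" using x ab by simp
  have "(f has_real_derivative f' x) (at x)"
    using der[OF x0] unfolding e .
  then show "\<exists>y. DERIV f x :> y \<and> y \<le> 0" using neg[OF x0] by blast
next
  have "continuous_on {0..} f"
    unfolding continuous_on_eq_continuous_within
  proof
    fix x :: real assume "x \<in> {0..}"
    then show "continuous (at x within {0..}) f" using der[of x] by (intro DERIV_continuous) auto
  qed
  then show "continuous_on {a..b} f" by (rule continuous_on_subset) (use ab in auto)
qed

lemma min_sq_deriv: "((\<lambda>x::real. (min x 0)^2) has_real_derivative (2 * min x 0)) (at x within s)"
proof -
  have "((\<lambda>x::real. (min x 0)^2) has_real_derivative (2 * min x 0)) (at x)"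
  proof (cases "x = 0")
    case True
    have "((\<lambda>h. ((min (x+h) 0)^2 - (min x 0)^2) / h) \<longlongrightarrow> 2 * min x 0) (at 0)"
    proof (rule tendsto_sandwich[where f="\<lambda>h. - \<bar>h\<bar>" and h="\<lambda>h. \<bar>h\<bar>"])
      have e: "((min (x+h) 0)^2 - (min x 0)^2) / h = (if h < 0 then h else 0)" for h
        using True by (cases "h < 0") (auto simp: min_def power2_eq_square)
      show "\<forall>\<^sub>F h in at 0. - \<bar>h\<bar> \<le> ((min (x+h) 0)^2 - (min x 0)^2) / h"
        unfolding e by (intro always_eventually allI) auto
      show "\<forall>\<^sub>F h in at 0. ((min (x+h) 0)^2 - (min x 0)^2) / h \<le> \<bar>h\<bar>"
        unfolding e by (intro always_eventually allI) auto
      show "((\<lambda>h::real. - \<bar>h\<bar>) \<longlongrightarrow> 2 * min x 0) (at 0)" using True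
        by (auto intro!: tendsto_eq_intros)
      show "((\<lambda>h::real. \<bar>h\<bar>) \<longlongrightarrow> 2 * min x 0) (at 0)" using True
        by (auto intro!: tendsto_eq_intros)
    qed
    then show ?thesis by (simp add: DERIV_def)
  next
    case False
    show ?thesis
    proof (cases "x < 0")
      case True
      have "((\<lambda>x::real. x^2) has_real_derivative (2 * min x 0)) (at x)"
        using True by (auto intro!: derivative_eq_intros simp: min_def)
      then show ?thesis
        apply (rule has_field_derivative_transform_within_open[where S="{..<0}"])
        using True by (auto simp: min_def)
    next
      case F2: False
      then have "x > 0" using False by simp
      have "((\<lambda>x::real. 0) has_real_derivative (2 * min x 0)) (at x)" using \<open>x > 0\<close> by (simp add: min_def)
      then show ?thesis
        apply (rule has_field_derivative_transform_within_open[where S="{0<..}"])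
        using \<open>x > 0\<close> by (auto simp: min_def)
    qed
  qed
  then show ?thesis by (rule has_field_derivative_at_within)
qed

locale noise =
  fixes S d :: nat and q0 :: "(nat\<Rightarrow>nat)\<Rightarrow>real" and q :: "real \<Rightarrow> (nat\<Rightarrow>nat) \<Rightarrow> real"
  assumes S1: "S \<ge> 1"
    and q0_nonneg: "\<forall>x\<in>states S d. q0 x \<ge> 0"
    and q0_sum: "(\<Sum>x\<in>states S d. q0 x) = 1"
    and law: "is_law S d q0 q"
begin

lemma q_init: "y \<in> states S d \<Longrightarrow> q 0 y = q0 y"
  using law unfolding is_law_def by auto

lemma ode:
  assumes "t \<ge> 0" "y \<in> states S d"
  shows "((\<lambda>\<tau>. q \<tau> y) has_real_derivative Lop S d (q t) y) (at t within {0..})"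
proof -
  from law assms have "((\<lambda>\<tau>. q \<tau> y) has_real_derivative (\<Sum>x\<in>states S d. q t x * gen S d x y)) (at t within {0..})"
    unfolding is_law_def by blast
  then show ?thesis using gen_sum[OF assms(2) S1, of "q t"] by simp
qed

lemma ode_at:
  assumes "t > 0" "y \<in> states S d"
  shows "((\<lambda>\<tau>. q \<tau> y) has_real_derivative Lop S d (q t) y) (at t)"
proof -
  have "t \<in> interior {0::real..}" using assms by simp
  then have e: "at t within {0..} = at t" by (rule at_within_interior)
  show ?thesis using ode[of t y] assms unfolding e by simp
qed

lemma mass:
  assumes "t \<ge> 0"
  shows "(\<Sum>y\<in>states S d. q t y) = 1"
proof -
  have "\<exists>c. \<forall>x\<in>{0::real..}. (\<lambda>t. \<Sum>y\<in>states S d. q t y) x = c"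
  proof (rule has_field_derivative_zero_constant)
    show "convex {0::real..}" by (rule convex_real_interval)
    fix x :: real assume x: "x \<in> {0..}"
    have "((\<lambda>t. \<Sum>y\<in>states S d. q t y) has_real_derivative (\<Sum>y\<in>states S d. Lop S d (q x) y)) (at x within {0..})"
      using x by (intro DERIV_sum ode) auto
    then show "((\<lambda>t. \<Sum>y\<in>states S d. q t y) has_real_derivative 0) (at x within {0..})"
      using Lop_sum[OF S1] by simp
  qed
  then obtain c where c: "\<And>x. x \<ge> 0 \<Longrightarrow> (\<Sum>y\<in>states S d. q x y) = c" by auto
  have "c = 1" using c[of 0] q_init q0_sum by simp
  then show ?thesis using c assms by simp
qed

lemma nonneg:
  assumes t: "t \<ge> 0" and y: "y \<in> states S d"
  shows "q t y \<ge> 0"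
proof -
  define N where "N t = (\<Sum>y\<in>states S d. (min (q t y) 0)^2)" for t
  have der: "(N has_real_derivative (\<Sum>y\<in>states S d. 2 * min (q s y) 0 * Lop S d (q s) y)) (at s within {0..})"
    if s: "s \<ge> 0" for s
    unfolding N_def
  proof (intro DERIV_sum)
    fix y assume y: "y \<in> states S d"
    show "((\<lambda>t. (min (q t y) 0)^2) has_real_derivative 2 * min (q s y) 0 * Lop S d (q s) y) (at s within {0..})"
      by (rule DERIV_chain2[OF min_sq_deriv ode[OF s y]])
  qed
  have nonpos: "(\<Sum>y\<in>states S d. 2 * min (q s y) 0 * Lop S d (q s) y) \<le> 0" for s
    using neg_part_le[OF S1, where d=d and p="q s"] by (simp add: sum_distrib_left[symmetric] mult.assoc)
  have "N t \<le> N 0" by (rule antimono_deriv[OF der nonpos]) (use t in auto)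
  also have "N 0 = 0" unfolding N_def using q_init q0_nonneg by (intro sum.neutral) auto
  finally have "N t \<le> 0" .
  moreover have "N t \<ge> 0" unfolding N_def by (intro sum_nonneg) auto
  ultimately have "N t = 0" by simp
  then have "\<forall>y\<in>states S d. (min (q t y) 0)^2 = 0"
    unfolding N_def by (subst sum_nonneg_eq_0_iff[symmetric]) (auto simp: finite_states)
  then have "min (q t y) 0 = 0" using y by simp
  then show ?thesis by (simp add: min_def split: if_splits)
qed

definition A :: "real \<Rightarrow> (nat \<Rightarrow> nat) \<Rightarrow> real" where
  "A t y = (\<Sum>j\<in>{1..d}. (\<Sum>a\<in>{1..S}. q t (y(j:=a))) / real S)"

lemma Lop_A: "Lop S d (q t) y = A t y - real d * q t y"
  unfolding Lop_def A_def by (simp add: sum_subtractf)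

lemma A_ge:
  assumes t: "t \<ge> 0" and y: "y \<in> states S d" and j: "j \<in> {1..d}" and b: "b \<in> {1..S}"
  shows "A t y \<ge> q t (y(j:=b)) / real S"
proof -
  have nn: "\<And>j a. j \<in> {1..d} \<Longrightarrow> a \<in> {1..S} \<Longrightarrow> q t (y(j:=a)) \<ge> 0"
    using nonneg[OF t] upd_in_states[OF y] by auto
  have "q t (y(j:=b)) \<le> (\<Sum>a\<in>{1..S}. q t (y(j:=a)))"
    by (rule member_le_sum[where f="\<lambda>a. q t (y(j:=a))"]) (use b nn j in auto)
  then have "q t (y(j:=b)) / real S \<le> (\<Sum>a\<in>{1..S}. q t (y(j:=a))) / real S"
    by (simp add: divide_right_mono)
  also have "\<dots> \<le> A t y" unfolding A_def
    by (rule member_le_sum[where f="\<lambda>j. (\<Sum>a\<in>{1..S}. q t (y(j:=a))) / real S"])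
       (use j nn in \<open>auto intro!: divide_nonneg_nonneg sum_nonneg\<close>)
  finally show ?thesis .
qed

lemma A_nonneg:
  assumes t: "t \<ge> 0" and y: "y \<in> states S d"
  shows "A t y \<ge> 0"
  unfolding A_def using nonneg[OF t] upd_in_states[OF y]
  by (auto intro!: divide_nonneg_nonneg sum_nonneg)

lemma r_deriv:
  assumes t: "t \<ge> 0" and y: "y \<in> states S d"
  shows "((\<lambda>\<tau>. exp (real d * \<tau>) * q \<tau> y) has_real_derivative exp (real d * t) * A t y) (at t within {0..})"
proof -
  have e: "((\<lambda>\<tau>. exp (real d * \<tau>)) has_real_derivative exp (real d * t) * real d) (at t within {0..})"
    by (auto intro!: derivative_eq_intros)
  from DERIV_mult[OF e ode[OF t y]]
  show ?thesis by (rule DERIV_cong) (simp add: Lop_A algebra_simps)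
qed

lemma step:
  assumes y: "y \<in> states S d" and j: "j \<in> {1..d}" and b: "b \<in> {1..S}"
    and P: "\<forall>s>0. q s (y(j:=b)) > 0"
  shows "\<forall>s>0. q s y > 0"
proof (intro allI impI)
  fix s :: real assume s: "s > 0"
  define r where "r = (\<lambda>\<tau>. exp (real d * \<tau>) * q \<tau> y)"
  have "r (s/2) < r s"
  proof (rule DERIV_pos_imp_increasing[of "s/2" s r])
    show "s/2 < s" using s by simp
    fix x assume x: "s/2 \<le> x" "x \<le> s"
    then have x0: "x > 0" using s by simp
    have "x \<in> interior {0::real..}" using x0 by simp
    then have e: "at x within {0..} = at x" by (rule at_within_interior)
    have "(r has_real_derivative exp (real d * x) * A x y) (at x)"
      using r_deriv[of x y] x0 y unfolding e r_def by simp
    moreover have "A x y > 0"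
    proof -
      have "q x (y(j:=b)) / real S > 0" using P x0 S1 by simp
      then show ?thesis using A_ge[of x y j b] x0 y j b by linarith
    qed
    ultimately show "\<exists>z. DERIV r x :> z \<and> z > 0" by (intro exI[of _ "exp (real d * x) * A x y"]) auto
  qed
  moreover have "r (s/2) \<ge> 0" unfolding r_def using nonneg[of "s/2" y] s y by simp
  ultimately have "r s > 0" by simp
  then show "q s y > 0" unfolding r_def by (simp add: zero_less_mult_iff)
qed

lemma base:
  assumes x0: "x0 \<in> states S d" and pos: "q0 x0 > 0"
  shows "\<forall>s>0. q s x0 > 0"
proof (intro allI impI)
  fix s :: real assume s: "s > 0"
  define r where "r = (\<lambda>\<tau>. - (exp (real d * \<tau>) * q \<tau> x0))"
  have der: "(r has_real_derivative - (exp (real d * t) * A t x0)) (at t within {0..})" if t: "t \<ge> 0" for t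
    using r_deriv[OF t x0] unfolding r_def by (rule DERIV_minus)
  have np: "- (exp (real d * t) * A t x0) \<le> 0" if t: "t \<ge> 0" for t
    using A_nonneg[OF t x0] by simp
  have "r s \<le> r 0" by (rule antimono_deriv[OF der np]) (use s in auto)
  then have "exp (real d * s) * q s x0 \<ge> q0 x0" unfolding r_def using q_init[OF x0] by simp
  then have "exp (real d * s) * q s x0 > 0" using pos by simp
  then show "q s x0 > 0" by (simp add: zero_less_mult_iff)
qed

lemma pos:
  assumes t: "t > 0" and y: "y \<in> states S d"
  shows "q t y > 0"
proof -
  obtain x0 where x0: "x0 \<in> states S d" "q0 x0 > 0"
  proof (rule ccontr)
    assume "\<not> thesis"
    then have "\<forall>x\<in>states S d. q0 x \<le> 0" using that by force
    then have "(\<Sum>x\<in>states S d. q0 x) \<le> 0" by (intro sum_nonpos) auto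
    then show False using q0_sum by simp
  qed
  have "\<forall>y\<in>states S d. card {i\<in>{1..d}. y i \<noteq> x0 i} = n \<longrightarrow> (\<forall>s>0. q s y > 0)" for n
  proof (induction n)
    case 0
    show ?case
    proof (intro ballI impI)
      fix y assume y: "y \<in> states S d" and c: "card {i\<in>{1..d}. y i \<noteq> x0 i} = 0"
      have "{i\<in>{1..d}. y i \<noteq> x0 i} = {}" using c by simp
      have "y i = x0 i" for i
      proof (cases "i \<in> {1..d}")
        case True then show ?thesis using \<open>{i\<in>{1..d}. y i \<noteq> x0 i} = {}\<close> by blast
      next
        case False then show ?thesis using y x0(1) by (auto simp: states_def PiE_def extensional_def)
      qed
      then have "y = x0" by (intro ext)
      then show "\<forall>s>0. q s y > 0" using base[OF x0] by simp
    qed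
  next
    case (Suc n)
    show ?case
    proof (intro ballI impI)
      fix y assume y: "y \<in> states S d" and c: "card {i\<in>{1..d}. y i \<noteq> x0 i} = Suc n"
      then obtain j where j: "j \<in> {i\<in>{1..d}. y i \<noteq> x0 i}"
        by (metis card.empty ex_in_conv nat.distinct(1))
      have jd: "j \<in> {1..d}" using j by simp
      define z where "z = y(j := x0 j)"
      have x0j: "x0 j \<in> {1..S}" using x0(1) jd by (auto simp: states_def PiE_iff)
      have yj: "y j \<in> {1..S}" using y jd by (auto simp: states_def PiE_iff)
      have z: "z \<in> states S d" unfolding z_def by (rule upd_in_states[OF y jd x0j])
      have "{i\<in>{1..d}. z i \<noteq> x0 i} = {i\<in>{1..d}. y i \<noteq> x0 i} - {j}"
        unfolding z_def by auto
      then have "card {i\<in>{1..d}. z i \<noteq> x0 i} = n" using c j by simp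
      then have Pz: "\<forall>s>0. q s z > 0" using Suc.IH z by blast
      have yz: "y = z(j := y j)" unfolding z_def by simp
      show "\<forall>s>0. q s y > 0"
        using step[OF y jd x0j] Pz unfolding z_def by blast
    qed
  qed
  then show ?thesis using y t by blast
qed

end

lemma cshift_in: "S \<ge> 1 \<Longrightarrow> cshift S a c \<in> {1..S}"
  unfolding cshift_def by (auto simp: le_less)

lemma mod_cancel_range:
  fixes a b S :: nat
  assumes "a \<in> {1..S}" "b \<in> {1..S}" "a mod S = b mod S"
  shows "a = b"
proof -
  have "a mod S = (if a = S then 0 else a)" using assms(1) by auto
  moreover have "b mod S = (if b = S then 0 else b)" using assms(2) by auto
  ultimately show ?thesis using assms by (auto split: if_splits)
qed

lemma cshift_inj: "S \<ge> 1 \<Longrightarrow> inj_on (\<lambda>a. cshift S a c) {1..S}"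
proof (rule inj_onI)
  fix a b assume S: "S \<ge> 1" and ab: "a \<in> {1..S}" "b \<in> {1..S}" and e: "cshift S a c = cshift S b c"
  have lt: "(a + c) mod S < S" "(b + c) mod S < S" using S by auto
  have "(a + c) mod S = (b + c) mod S"
  proof -
    consider "(a+c) mod S = 0" "(b+c) mod S = 0" | "(a+c) mod S = 0" "(b+c) mod S \<noteq> 0"
      | "(a+c) mod S \<noteq> 0" "(b+c) mod S = 0" | "(a+c) mod S \<noteq> 0" "(b+c) mod S \<noteq> 0" by blast
    then show ?thesis
    proof cases
      case 1 then show ?thesis by simp
    next
      case 2 then have "S = (b+c) mod S" using e unfolding cshift_def by simp
      then show ?thesis using lt(2) by linarith
    next
      case 3 then have "(a+c) mod S = S" using e unfolding cshift_def by simp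
      then show ?thesis using lt(1) by linarith
    next
      case 4 then show ?thesis using e unfolding cshift_def by simp
    qed
  qed
  then show "a = b"
  proof -
    assume eq: "(a + c) mod S = (b + c) mod S"
    have key: "x = y" if xy: "x \<ge> y" "x \<in> {1..S}" "y \<in> {1..S}" "(x + c) mod S = (y + c) mod S" for x y
    proof -
      have "S dvd (x + c) - (y + c)" using mod_eq_dvd_iff_nat[of "y+c" "x+c" S] xy by simp
      then have "S dvd x - y" by simp
      moreover have "x - y < S" using xy by auto
      ultimately have "x - y = 0" using nat_dvd_not_less by blast
      then show ?thesis using xy by simp
    qed
    show ?thesis
    proof (cases "a \<ge> b")
      case True then show ?thesis using key[of b a] ab eq by simp
    next
      case False then show ?thesis using key[of a b] ab eq by simp
    qed
  qed
qed

lemma cshift_img: assumes S: "S \<ge> 1" shows "(\<lambda>a. cshift S a c) ` {1..S} = {1..S}"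
proof (rule endo_inj_surj)
  show "(\<lambda>a. cshift S a c) ` {1..S} \<subseteq> {1..S}" using cshift_in[OF S] by auto
  show "inj_on (\<lambda>a. cshift S a c) {1..S}" by (rule cshift_inj[OF S])
qed simp

lemma sum_cshift: assumes S: "S \<ge> 1" shows "(\<Sum>a\<in>{1..S}. h (cshift S a c)) = (\<Sum>a\<in>{1..S}. h a)"
proof -
  have "sum h ((\<lambda>a. cshift S a c) ` {1..S}) = sum (h \<circ> (\<lambda>a. cshift S a c)) {1..S}"
    by (rule sum.reindex[OF cshift_inj[OF S]])
  then show ?thesis using cshift_img[OF S, of c] by (simp add: o_def)
qed

lemma oplus_in:
  assumes "S \<ge> 1" "x \<in> states S d" "i \<in> {1..d}"
  shows "oplus S x i c \<in> states S d"
  unfolding oplus_def by (rule upd_in_states[OF assms(2,3) cshift_in[OF assms(1)]])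

lemma oplus_inj:
  assumes S: "S \<ge> 1" and i: "i \<in> {1..d}"
  shows "inj_on (\<lambda>x. oplus S x i c) (states S d)"
proof (rule inj_onI)
  fix x y assume x: "x \<in> states S d" and y: "y \<in> states S d" and e: "oplus S x i c = oplus S y i c"
  have xi: "x i \<in> {1..S}" and yi: "y i \<in> {1..S}" using x y i by (auto simp: states_def PiE_iff)
  have "cshift S (x i) c = cshift S (y i) c" using e unfolding oplus_def by (metis fun_upd_same)
  then have "x i = y i" using inj_onD[OF cshift_inj[OF S] _ xi yi] by blast
  show "x = y"
  proof
    fix k show "x k = y k"
    proof (cases "k = i")
      case True then show ?thesis using \<open>x i = y i\<close> by simp
    next
      case False then show ?thesis using e unfolding oplus_def by (metis fun_upd_other)
    qed
  qed
qed

lemma sum_oplus: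
  assumes S: "S \<ge> 1" and i: "i \<in> {1..d}"
  shows "(\<Sum>x\<in>states S d. h (oplus S x i c)) = (\<Sum>x\<in>states S d. h x)"
proof -
  have img: "(\<lambda>x. oplus S x i c) ` states S d = states S d"
    by (rule endo_inj_surj) (auto simp: finite_states oplus_in[OF S _ i] oplus_inj[OF S i])
  have "sum h ((\<lambda>x. oplus S x i c) ` states S d) = sum (h \<circ> (\<lambda>x. oplus S x i c)) (states S d)"
    by (rule sum.reindex[OF oplus_inj[OF S i]])
  then show ?thesis using img by (simp add: o_def)
qed

lemma Lop_oplus:
  assumes S: "S \<ge> 1"
  shows "Lop S d p (oplus S x i c) = Lop S d (\<lambda>y. p (oplus S y i c)) x"
  unfolding Lop_def
proof (intro sum.cong refl)
  fix j
  show "(\<Sum>a\<in>{1..S}. p ((oplus S x i c)(j := a))) / real S - p (oplus S x i c) =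
        (\<Sum>a\<in>{1..S}. p (oplus S (x(j := a)) i c)) / real S - p (oplus S x i c)"
  proof (cases "j = i")
    case True
    have "(\<Sum>a\<in>{1..S}. p (oplus S (x(j := a)) i c)) = (\<Sum>a\<in>{1..S}. p (x(i := cshift S a c)))"
      using True by (simp add: oplus_def)
    also have "\<dots> = (\<Sum>a\<in>{1..S}. p (x(i := a)))" by (rule sum_cshift[OF S, where h="\<lambda>b. p (x(i:=b))"])
    also have "\<dots> = (\<Sum>a\<in>{1..S}. p ((oplus S x i c)(j := a)))" using True by (simp add: oplus_def)
    finally show ?thesis by simp
  next
    case False
    then have "\<And>a. oplus S (x(j := a)) i c = (oplus S x i c)(j := a)"
      by (simp add: oplus_def fun_upd_twist)
    then show ?thesis by simp
  qed
qed

lemma marg_oplus: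
  assumes S: "S \<ge> 1"
  shows "(\<Sum>a\<in>{1..S}. p (oplus S (x(i:=a)) i c)) = (\<Sum>a\<in>{1..S}. p (x(i:=a)))"
  using sum_cshift[OF S, where h="\<lambda>b. p (x(i:=b))"] by (simp add: oplus_def)

lemma per_j:
  fixes f g :: "(nat\<Rightarrow>nat) \<Rightarrow> real"
  assumes S: "S \<ge> 1" and j: "j \<in> {1..d}"
    and fpos: "\<And>x. x \<in> states S d \<Longrightarrow> f x > 0" and gpos: "\<And>x. x \<in> states S d \<Longrightarrow> g x > 0"
    and fsum: "(\<Sum>x\<in>states S d. f x) = 1"
  defines "F \<equiv> \<lambda>x. \<Sum>a\<in>{1..S}. f (x(j:=a))" and "G \<equiv> \<lambda>x. \<Sum>a\<in>{1..S}. g (x(j:=a))"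
  shows "(\<Sum>x\<in>states S d. ln (f x / g x) * F x) / real S - (\<Sum>x\<in>states S d. (f x / g x) * G x) / real S
          \<le> (\<Sum>x\<in>states S d. f x * ln (F x / G x)) - 1"
    and "(\<Sum>x\<in>states S d. f x * ln (F x / G x)) \<le> (\<Sum>x\<in>states S d. f x * ln (f x / g x))"
proof -
  have Sp: "real S > 0" using S by simp
  have ne: "{1..S} \<noteq> {}" using S by simp
  have Fpos: "F x > 0" if x: "x \<in> states S d" for x
    unfolding F_def using upd_in_states[OF x j] fpos ne by (intro sum_pos) auto
  have Gpos: "G x > 0" if x: "x \<in> states S d" for x
    unfolding G_def using upd_in_states[OF x j] gpos ne by (intro sum_pos) auto
  have Finv: "F (x(j:=a)) = F x" for x a unfolding F_def by simp
  have Ginv: "G (x(j:=a)) = G x" for x a unfolding G_def by simp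
  have FS: "(\<Sum>x\<in>states S d. F x * K x) = real S * (\<Sum>x\<in>states S d. f x * K x)"
    if K: "\<And>x a. K (x(j:=a)) = K x" for K
    unfolding F_def by (rule swap_K[OF j]) (use K in auto)
  have GS: "(\<Sum>x\<in>states S d. G x * K x) = real S * (\<Sum>x\<in>states S d. g x * K x)"
    if K: "\<And>x a. K (x(j:=a)) = K x" for K
    unfolding G_def by (rule swap_K[OF j]) (use K in auto)
  have sumF: "(\<Sum>x\<in>states S d. F x) = real S"
    using FS[of "\<lambda>_. 1"] fsum by simp
  have sumgR: "(\<Sum>x\<in>states S d. g x * (F x / G x)) = 1"
  proof -
    have "(\<Sum>x\<in>states S d. G x * (F x / G x)) = real S * (\<Sum>x\<in>states S d. g x * (F x / G x))"
      by (rule GS) (simp add: Finv Ginv)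
    moreover have "(\<Sum>x\<in>states S d. G x * (F x / G x)) = (\<Sum>x\<in>states S d. F x)"
      using Gpos by (intro sum.cong) (auto simp: less_imp_neq[symmetric])
    ultimately show ?thesis using sumF Sp by simp
  qed
  have p1: "ln (f x / g x) * F x / real S - (f x / g x) * G x / real S \<le> F x / real S * ln (F x / G x) - F x / real S"
    if x: "x \<in> states S d" for x
  proof -
    define r where "r = f x / g x"
    define R where "R = F x / G x"
    have r: "r > 0" unfolding r_def using fpos[OF x] gpos[OF x] by simp
    have R: "R > 0" unfolding R_def using Fpos[OF x] Gpos[OF x] by simp
    have "ln (r / R) \<le> r / R - 1" by (rule ln_le_minus_one) (use r R in simp)
    then have "ln r - ln R \<le> r / R - 1" using r R by (simp add: ln_div)
    then have "F x / real S * (ln r - ln R) \<le> F x / real S * (r / R - 1)"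
      using Fpos[OF x] Sp by (intro mult_left_mono) auto
    also have "F x / real S * (r / R - 1) = r * G x / real S - F x / real S"
      unfolding R_def using Fpos[OF x] Gpos[OF x] Sp by (simp add: field_simps)
    finally have h: "F x / real S * (ln r - ln R) \<le> r * G x / real S - F x / real S" .
    have "F x / real S * (ln r - ln R) = ln r * F x / real S - F x / real S * ln R"
      by (simp add: algebra_simps diff_divide_distrib)
    then show ?thesis unfolding r_def[symmetric] R_def[symmetric] using h by (simp only: times_divide_eq_right times_divide_eq_left)
  qed
  have "(\<Sum>x\<in>states S d. ln (f x / g x) * F x) / real S - (\<Sum>x\<in>states S d. (f x / g x) * G x) / real S
      = (\<Sum>x\<in>states S d. ln (f x / g x) * F x / real S - (f x / g x) * G x / real S)"
    by (simp add: sum_subtractf sum_divide_distrib)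
  also have "\<dots> \<le> (\<Sum>x\<in>states S d. F x / real S * ln (F x / G x) - F x / real S)"
    using p1 by (rule sum_mono)
  also have "\<dots> = (\<Sum>x\<in>states S d. F x * (ln (F x / G x) / real S)) - (\<Sum>x\<in>states S d. F x) / real S"
    by (simp add: sum_subtractf sum_divide_distrib)
  also have "(\<Sum>x\<in>states S d. F x * (ln (F x / G x) / real S)) = real S * (\<Sum>x\<in>states S d. f x * (ln (F x / G x) / real S))"
    by (rule FS) (simp add: Finv Ginv)
  also have "\<dots> = (\<Sum>x\<in>states S d. f x * ln (F x / G x))"
    using Sp by (simp add: sum_distrib_left)
  finally show "(\<Sum>x\<in>states S d. ln (f x / g x) * F x) / real S - (\<Sum>x\<in>states S d. (f x / g x) * G x) / real S
          \<le> (\<Sum>x\<in>states S d. f x * ln (F x / G x)) - 1" using sumF Sp by simp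
  have p2: "f x * ln (F x / G x) \<le> f x * ln (f x / g x) + (g x * (F x / G x) - f x)"
    if x: "x \<in> states S d" for x
  proof -
    define r where "r = f x / g x"
    define R where "R = F x / G x"
    have r: "r > 0" unfolding r_def using fpos[OF x] gpos[OF x] by simp
    have R: "R > 0" unfolding R_def using Fpos[OF x] Gpos[OF x] by simp
    have "ln (R / r) \<le> R / r - 1" by (rule ln_le_minus_one) (use r R in simp)
    then have "ln R - ln r \<le> R / r - 1" using r R by (simp add: ln_div)
    then have "f x * (ln R - ln r) \<le> f x * (R / r - 1)"
      using fpos[OF x] by (intro mult_left_mono) auto
    also have "f x * (R / r - 1) = g x * R - f x"
      unfolding r_def using fpos[OF x] gpos[OF x] by (simp add: field_simps)
    finally have h: "f x * (ln R - ln r) \<le> g x * R - f x" .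
    then show ?thesis unfolding r_def[symmetric] R_def[symmetric] by (simp add: algebra_simps)
  qed
  have "(\<Sum>x\<in>states S d. f x * ln (F x / G x)) \<le> (\<Sum>x\<in>states S d. f x * ln (f x / g x) + (g x * (F x / G x) - f x))"
    using p2 by (rule sum_mono)
  also have "\<dots> = (\<Sum>x\<in>states S d. f x * ln (f x / g x)) + ((\<Sum>x\<in>states S d. g x * (F x / G x)) - (\<Sum>x\<in>states S d. f x))"
    by (simp add: sum.distrib sum_subtractf)
  finally show "(\<Sum>x\<in>states S d. f x * ln (F x / G x)) \<le> (\<Sum>x\<in>states S d. f x * ln (f x / g x))"
    using sumgR fsum by simp
qed

lemma core:
  fixes f g :: "(nat\<Rightarrow>nat) \<Rightarrow> real"
  assumes S: "S \<ge> 1" and i: "i \<in> {1..d}"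
    and fpos: "\<And>x. x \<in> states S d \<Longrightarrow> f x > 0" and gpos: "\<And>x. x \<in> states S d \<Longrightarrow> g x > 0"
    and fsum: "(\<Sum>x\<in>states S d. f x) = 1"
    and marg: "\<And>x. x \<in> states S d \<Longrightarrow> (\<Sum>a\<in>{1..S}. g (x(i:=a))) = (\<Sum>a\<in>{1..S}. f (x(i:=a)))"
  shows "(\<Sum>x\<in>states S d. Lop S d f x * ln (f x / g x) - f x * Lop S d g x / g x)
           \<le> - (\<Sum>x\<in>states S d. f x * ln (f x / g x))"
proof -
  define D where "D = (\<Sum>x\<in>states S d. f x * ln (f x / g x))"
  define C where "C j = (\<Sum>x\<in>states S d. ln (f x / g x) * (\<Sum>a\<in>{1..S}. f (x(j:=a)))) / real S - D
      - ((\<Sum>x\<in>states S d. (f x / g x) * (\<Sum>a\<in>{1..S}. g (x(j:=a)))) / real S - 1)" for j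
  have e1: "(\<Sum>x\<in>states S d. Lop S d f x * ln (f x / g x)) =
      (\<Sum>j\<in>{1..d}. (\<Sum>x\<in>states S d. ln (f x / g x) * (\<Sum>a\<in>{1..S}. f (x(j:=a)))) / real S - D)"
    using Lop_expand[of "\<lambda>x. ln (f x / g x)" S d f] unfolding D_def by (simp add: mult.commute)
  have fg1: "(\<Sum>x\<in>states S d. f x / g x * g x) = 1"
    using fsum gpos by (simp add: less_imp_neq[symmetric])
  have e2: "(\<Sum>x\<in>states S d. f x * Lop S d g x / g x) =
      (\<Sum>j\<in>{1..d}. (\<Sum>x\<in>states S d. (f x / g x) * (\<Sum>a\<in>{1..S}. g (x(j:=a)))) / real S - 1)"
  proof -
    have "(\<Sum>x\<in>states S d. f x * Lop S d g x / g x) = (\<Sum>x\<in>states S d. (f x / g x) * Lop S d g x)"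
      by simp
    also have "\<dots> = (\<Sum>j\<in>{1..d}. (\<Sum>x\<in>states S d. (f x / g x) * (\<Sum>a\<in>{1..S}. g (x(j:=a)))) / real S - (\<Sum>x\<in>states S d. f x / g x * g x))"
      by (rule Lop_expand)
    finally show ?thesis using fg1 by simp
  qed
  have "(\<Sum>x\<in>states S d. Lop S d f x * ln (f x / g x) - f x * Lop S d g x / g x) = (\<Sum>j\<in>{1..d}. C j)"
    unfolding sum_subtractf e1 e2 C_def by (simp add: sum_subtractf)
  also have "\<dots> = C i + (\<Sum>j\<in>{1..d}-{i}. C j)"
    using i by (simp add: sum.remove)
  also have "\<dots> \<le> -D + 0"
  proof (rule add_mono)
    have Ci1: "C i \<le> (\<Sum>x\<in>states S d. f x * ln ((\<Sum>a\<in>{1..S}. f (x(i:=a))) / (\<Sum>a\<in>{1..S}. g (x(i:=a))))) - D"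
      using per_j(1)[where f=f and g=g and S=S and j=i and d=d, OF S i fpos gpos fsum] unfolding C_def by simp
    have "(\<Sum>x\<in>states S d. f x * ln ((\<Sum>a\<in>{1..S}. f (x(i:=a))) / (\<Sum>a\<in>{1..S}. g (x(i:=a))))) = 0"
    proof (intro sum.neutral ballI)
      fix x assume x: "x \<in> states S d"
      have "(\<Sum>a\<in>{1..S}. f (x(i:=a))) > 0"
        using upd_in_states[OF x i] fpos S by (intro sum_pos) auto
      then show "f x * ln ((\<Sum>a\<in>{1..S}. f (x(i:=a))) / (\<Sum>a\<in>{1..S}. g (x(i:=a)))) = 0"
        using marg[OF x] by simp
    qed
    then show "C i \<le> -D" using Ci1 by simp
  next
    show "(\<Sum>j\<in>{1..d}-{i}. C j) \<le> 0"
    proof (rule sum_nonpos)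
      fix j assume j: "j \<in> {1..d}-{i}"
      then have jd: "j \<in> {1..d}" by simp
      show "C j \<le> 0"
        using per_j(1)[where f=f and g=g and S=S and j=j and d=d, OF S jd fpos gpos fsum] per_j(2)[where f=f and g=g and S=S and j=j and d=d, OF S jd fpos gpos fsum]
        unfolding C_def D_def by simp
    qed
  qed
  finally show ?thesis unfolding D_def by simp
qed

context noise
begin

definition P :: "nat \<Rightarrow> nat \<Rightarrow> real \<Rightarrow> real" where
  "P i c t = (\<Sum>x\<in>states S d. Lop S d (q t) x * ln (q t x / q t (oplus S x i c))
      - q t x * Lop S d (q t) (oplus S x i c) / q t (oplus S x i c) + Lop S d (q t) x)"

lemma phi_ic_deriv:
  assumes t: "t > 0" and i: "i \<in> {1..d}"
  shows "(phi_ic S d q i c has_real_derivative P i c t) (at t)"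
proof -
  have eq: "phi_ic S d q i c = (\<lambda>\<tau>. \<Sum>x\<in>states S d. q \<tau> x * - ln (q \<tau> (oplus S x i c) / q \<tau> x))"
    by (intro ext) (simp add: phi_ic_def ratio_def)
  have tm: "((\<lambda>\<tau>. q \<tau> x * - ln (q \<tau> (oplus S x i c) / q \<tau> x)) has_real_derivative
      Lop S d (q t) x * ln (q t x / q t (oplus S x i c))
      - q t x * Lop S d (q t) (oplus S x i c) / q t (oplus S x i c) + Lop S d (q t) x) (at t)"
    if x: "x \<in> states S d" for x
  proof -
    define f where "f = q t x"
    define g where "g = q t (oplus S x i c)"
    define Lf where "Lf = Lop S d (q t) x"
    define Lg where "Lg = Lop S d (q t) (oplus S x i c)"
    have sx: "oplus S x i c \<in> states S d" by (rule oplus_in[OF S1 x i])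
    have f: "f > 0" unfolding f_def by (rule pos[OF t x])
    have g: "g > 0" unfolding g_def by (rule pos[OF t sx])
    have df: "((\<lambda>\<tau>. q \<tau> x) has_real_derivative Lf) (at t)" unfolding Lf_def by (rule ode_at[OF t x])
    have dg: "((\<lambda>\<tau>. q \<tau> (oplus S x i c)) has_real_derivative Lg) (at t)" unfolding Lg_def by (rule ode_at[OF t sx])
    have dq: "((\<lambda>\<tau>. q \<tau> (oplus S x i c) / q \<tau> x) has_real_derivative (Lg * f - g * Lf) / (f * f)) (at t)"
      using DERIV_divide[OF dg df] f unfolding f_def g_def by simp
    have dl: "((\<lambda>\<tau>. ln (q \<tau> (oplus S x i c) / q \<tau> x)) has_real_derivative 1 / (g / f) * ((Lg * f - g * Lf) / (f * f))) (at t)"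
      using DERIV_chain2[OF DERIV_ln_divide dq] f g unfolding f_def g_def by simp
    have dt: "((\<lambda>\<tau>. q \<tau> x * - ln (q \<tau> (oplus S x i c) / q \<tau> x)) has_real_derivative
        Lf * - ln (g / f) + - (1 / (g / f) * ((Lg * f - g * Lf) / (f * f))) * f) (at t)"
      using DERIV_mult[OF df DERIV_minus[OF dl]] unfolding f_def g_def by simp
    have "Lf * - ln (g / f) + - (1 / (g / f) * ((Lg * f - g * Lf) / (f * f))) * f
        = Lf * ln (f / g) - f * Lg / g + Lf"
      using f g by (simp add: ln_div field_simps)
    then show ?thesis using dt unfolding f_def g_def Lf_def Lg_def by simp
  qed
  show ?thesis unfolding eq P_def by (intro DERIV_sum tm)
qed

lemma phi_ic_pos:
  assumes t: "t > 0" and i: "i \<in> {1..d}"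
  shows "phi_ic S d q i c t = (\<Sum>x\<in>states S d. q t x * ln (q t x / q t (oplus S x i c)))"
proof -
  have "q t x * - ln (q t (oplus S x i c) / q t x) = q t x * ln (q t x / q t (oplus S x i c))"
    if x: "x \<in> states S d" for x
    using pos[OF t x] pos[OF t oplus_in[OF S1 x i]] by (simp add: ln_div algebra_simps)
  then show ?thesis unfolding phi_ic_def ratio_def by (intro sum.cong) auto
qed

lemma phi_ic_main:
  assumes t: "t > 0" and i: "i \<in> {1..d}"
  shows "- P i c t \<ge> phi_ic S d q i c t" and "phi_ic S d q i c t \<ge> 0"
proof -
  define f where "f = q t"
  define g where "g = (\<lambda>x. q t (oplus S x i c))"
  have fpos: "\<And>x. x \<in> states S d \<Longrightarrow> f x > 0" unfolding f_def using pos[OF t] by auto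
  have gpos: "\<And>x. x \<in> states S d \<Longrightarrow> g x > 0" unfolding g_def using pos[OF t] oplus_in[OF S1 _ i] by auto
  have fsum: "(\<Sum>x\<in>states S d. f x) = 1" unfolding f_def using mass t by simp
  have gsum: "(\<Sum>x\<in>states S d. g x) = 1" unfolding g_def using sum_oplus[OF S1 i, of "q t" c] fsum f_def by simp
  have marg: "\<And>x. x \<in> states S d \<Longrightarrow> (\<Sum>a\<in>{1..S}. g (x(i:=a))) = (\<Sum>a\<in>{1..S}. f (x(i:=a)))"
    unfolding f_def g_def by (rule marg_oplus[OF S1])
  have Lg: "Lop S d (q t) (oplus S x i c) = Lop S d g x" for x
    unfolding g_def by (rule Lop_oplus[OF S1])
  have "P i c t = (\<Sum>x\<in>states S d. Lop S d f x * ln (f x / g x) - f x * Lop S d g x / g x) + (\<Sum>x\<in>states S d. Lop S d f x)"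
    unfolding P_def f_def Lg by (simp add: sum.distrib g_def)
  also have "(\<Sum>x\<in>states S d. Lop S d f x) = 0" by (rule Lop_sum[OF S1])
  finally have "P i c t \<le> - (\<Sum>x\<in>states S d. f x * ln (f x / g x))"
    using core[OF S1 i fpos gpos fsum marg] by simp
  moreover have ph: "phi_ic S d q i c t = (\<Sum>x\<in>states S d. f x * ln (f x / g x))"
    unfolding f_def g_def by (rule phi_ic_pos[OF t i])
  ultimately show "- P i c t \<ge> phi_ic S d q i c t" by simp
  have "(\<Sum>x\<in>states S d. f x - g x) \<le> (\<Sum>x\<in>states S d. f x * ln (f x / g x))"
  proof (rule sum_mono)
    fix x assume x: "x \<in> states S d"
    have "ln (g x / f x) \<le> g x / f x - 1" using fpos[OF x] gpos[OF x] by (intro ln_le_minus_one) simp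
    then have "f x * ln (g x / f x) \<le> f x * (g x / f x - 1)" using fpos[OF x] by (intro mult_left_mono) auto
    moreover have "f x * ln (g x / f x) = - (f x * ln (f x / g x))"
      using fpos[OF x] gpos[OF x] by (simp add: ln_div algebra_simps)
    moreover have "f x * (g x / f x - 1) = g x - f x"
      using fpos[OF x] by (simp add: field_simps)
    ultimately show "f x - g x \<le> f x * ln (f x / g x)" by linarith
  qed
  then show "phi_ic S d q i c t \<ge> 0" using ph fsum gsum by (simp add: sum_subtractf)
qed

end

theorem mainTheorem17:
  fixes S d :: nat
    and q0 :: "(nat \<Rightarrow> nat) \<Rightarrow> real"
    and q :: "real \<Rightarrow> (nat \<Rightarrow> nat) \<Rightarrow> real"
  assumes q0_nonneg: "\<forall>x\<in>states S d. q0 x \<ge> 0"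
    and q0_sum: "(\<Sum>x\<in>states S d. q0 x) = 1"
    and law: "is_law S d q0 q"
  shows "(\<forall>i\<in>{1..d}. \<forall>c\<in>{1..S}. \<forall>t>0.
            phi_ic S d q i c differentiable (at t) \<and>
            - deriv (phi_ic S d q i c) t \<ge> phi_ic S d q i c t)
       \<and> (\<forall>t>0. phi S d q differentiable (at t) \<and>
            - deriv (phi S d q) t \<ge> phi S d q t \<and> phi S d q t \<ge> 0)
       \<and> (\<forall>s t. 0 < s \<longrightarrow> s \<le> t \<longrightarrow> phi S d q t \<le> phi S d q s)"
proof (cases "S = 0")
  case True
  have ph: "phi S d q = (\<lambda>t. 0)" by (intro ext) (simp add: phi_def True)
  have d0: "((\<lambda>t::real. 0::real) has_real_derivative 0) (at t)" for t by simp
  have "(\<lambda>t::real. 0::real) differentiable (at t)" for t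
    using d0 unfolding real_differentiable_def by blast
  moreover have "deriv (\<lambda>t::real. 0::real) t = 0" for t by (rule DERIV_imp_deriv[OF d0])
  ultimately show ?thesis unfolding ph using True by simp
next
  case False
  then have S1: "S \<ge> 1" by simp
  interpret noise S d q0 q using S1 q0_nonneg q0_sum law by unfold_locales
  have part1: "phi_ic S d q i c differentiable (at t) \<and> - deriv (phi_ic S d q i c) t \<ge> phi_ic S d q i c t"
    if i: "i \<in> {1..d}" and t: "t > 0" for i c t
  proof
    show "phi_ic S d q i c differentiable (at t)"
      using phi_ic_deriv[OF t i] unfolding real_differentiable_def by blast
    show "- deriv (phi_ic S d q i c) t \<ge> phi_ic S d q i c t"
      using DERIV_imp_deriv[OF phi_ic_deriv[OF t i]] phi_ic_main(1)[OF t i] by simp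
  qed
  have phieq: "phi S d q = (\<lambda>t. (1 / real S) * (\<Sum>i\<in>{1..d}. \<Sum>c\<in>{1..S}. phi_ic S d q i c t))"
    by (intro ext) (simp add: phi_def)
  define Q where "Q t = (1 / real S) * (\<Sum>i\<in>{1..d}. \<Sum>c\<in>{1..S}. P i c t)" for t
  have dphi: "(phi S d q has_real_derivative Q t) (at t)" if t: "t > 0" for t
    unfolding phieq Q_def
    by (intro DERIV_cmult DERIV_sum phi_ic_deriv[OF t]) auto
  have phinn: "phi S d q t \<ge> 0" if t: "t > 0" for t
  proof -
    have "(\<Sum>i\<in>{1..d}. \<Sum>c\<in>{1..S}. phi_ic S d q i c t) \<ge> 0"
      using phi_ic_main(2)[OF t] by (intro sum_nonneg) auto
    then show ?thesis unfolding phieq by simp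
  qed
  have ineq: "- Q t \<ge> phi S d q t" if t: "t > 0" for t
  proof -
    have "(\<Sum>i\<in>{1..d}. \<Sum>c\<in>{1..S}. phi_ic S d q i c t) \<le> (\<Sum>i\<in>{1..d}. \<Sum>c\<in>{1..S}. - P i c t)"
      using phi_ic_main(1)[OF t] by (intro sum_mono) auto
    then have "(1 / real S) * (\<Sum>i\<in>{1..d}. \<Sum>c\<in>{1..S}. phi_ic S d q i c t) \<le> (1 / real S) * (\<Sum>i\<in>{1..d}. \<Sum>c\<in>{1..S}. - P i c t)"
      by (intro mult_left_mono) auto
    then show ?thesis unfolding phieq Q_def by (simp add: sum_negf)
  qed
  have part2: "phi S d q differentiable (at t) \<and> - deriv (phi S d q) t \<ge> phi S d q t \<and> phi S d q t \<ge> 0"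
    if t: "t > 0" for t
    using dphi[OF t] DERIV_imp_deriv[OF dphi[OF t]] ineq[OF t] phinn[OF t]
    unfolding real_differentiable_def by auto
  have part3: "phi S d q t \<le> phi S d q s" if s: "0 < s" "s \<le> t" for s t
  proof (rule DERIV_nonpos_imp_nonincreasing[OF s(2)])
    fix x assume x: "s \<le> x" "x \<le> t"
    then have x0: "x > 0" using s by simp
    show "\<exists>y. DERIV (phi S d q) x :> y \<and> y \<le> 0"
      using dphi[OF x0] ineq[OF x0] phinn[OF x0] by (intro exI[of _ "Q x"]) auto
  qed
  show ?thesis using part1 part2 part3 by blast
qed

end
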